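(* Let $(\mathcal X,\mathcal B,\pi)$ be a measure space with $\pi$ $\sigma$-finite, $r$ measurable, $2\le K<\infty$, and the noise stationary: $\{\varepsilon(x)\}$ a real-valued random field with $\varepsilon(x)\overset d=\varepsilon$ for all $x$, for some random variable $\varepsilon$; let $\varepsilon_1,\dots,\varepsilon_K$ be i.i.d. copies independent of $X_1,\dots,X_K$, which are i.i.d. with density $p\in\mathcal P_\pi$. Set $\tilde p_j:=e^{r(X_j)+\varepsilon_j(X_j)}/\sum_{i=1}^Ke^{r(X_i)+\varepsilon_i(X_i)}$. Then for every measurable $B\subset\mathcal X$, $$\mathbb S_p(B)=\mathbb E\Bigl[\sum_{j=1}^K\tilde p_j\,\mathbf 1_B(X_j)\Bigr].$$
   Context: $\mathcal P_\pi$ = probability densities w.r.t. $\pi$. $H^K_p(x):=\mathbb E\bigl[K e^{r(x)+\varepsilon(x)}/(e^{r(x)+\varepsilon(x)}+\sum_{k=1}^{K-1}e^{r(X_k)+\varepsilon_k(X_k)})\bigr]$ with $X_k$ i.i.d. with density $p$ independent of the noise copies; $S_p(x):=p(x)H^K_p(x)$ and $\mathbb S_p(B):=\int_BS_p(x)\,\pi(dx)$. *)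

theory Defs
  imports "HOL-Probability.Probability"
begin

definition is_density :: "'a measure \<Rightarrow> ('a \<Rightarrow> real) \<Rightarrow> bool" where
  "is_density \<pi> p \<longleftrightarrow> p \<in> borel_measurable \<pi> \<and> (\<forall>x\<in>space \<pi>. 0 \<le> p x)
     \<and> (\<integral>\<^sup>+ x. ennreal (p x) \<partial>\<pi>) = 1"

text \<open>Canonical model: the noise field is e :: 'w => 'a => real on the probability space N;
  one sample = (noise copy, point) drawn from N (x) (density pi p).  Independent copies are
  coordinates of a product measure.\<close>
definition sample_space :: "'w measure \<Rightarrow> 'a measure \<Rightarrow> ('a \<Rightarrow> real) \<Rightarrow> ('w \<times> 'a) measure" where
  "sample_space N \<pi> p = N \<Otimes>\<^sub>M density \<pi> (\<lambda>x. ennreal (p x))"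

text \<open>H^K_p(x): eps is a fresh noise copy (first component), X_1..X_{K-1} with their noise
  copies eps_k are the K-1 coordinates of the product.\<close>
definition H :: "('a \<Rightarrow> real) \<Rightarrow> ('w \<Rightarrow> 'a \<Rightarrow> real) \<Rightarrow> 'w measure \<Rightarrow> 'a measure
                  \<Rightarrow> ('a \<Rightarrow> real) \<Rightarrow> nat \<Rightarrow> 'a \<Rightarrow> real" where
  "H r e N \<pi> p K x =
     (\<integral> z. real K * exp (r x + e (fst z) x) /
             (exp (r x + e (fst z) x) +
              (\<Sum>k<K - 1. exp (r (snd (snd z k)) + e (fst (snd z k)) (snd (snd z k)))))
      \<partial>(N \<Otimes>\<^sub>M (\<Pi>\<^sub>M k\<in>{..<K - 1}. sample_space N \<pi> p)))"

definition S :: "('a \<Rightarrow> real) \<Rightarrow> ('w \<Rightarrow> 'a \<Rightarrow> real) \<Rightarrow> 'w measure \<Rightarrow> 'a measure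
                  \<Rightarrow> ('a \<Rightarrow> real) \<Rightarrow> nat \<Rightarrow> 'a \<Rightarrow> real" where
  "S r e N \<pi> p K x = p x * H r e N \<pi> p K x"

definition SS :: "('a \<Rightarrow> real) \<Rightarrow> ('w \<Rightarrow> 'a \<Rightarrow> real) \<Rightarrow> 'w measure \<Rightarrow> 'a measure
                  \<Rightarrow> ('a \<Rightarrow> real) \<Rightarrow> nat \<Rightarrow> 'a set \<Rightarrow> real" where
  "SS r e N \<pi> p K B = (\<integral>x\<in>B. S r e N \<pi> p K x \<partial>\<pi>)"

end

theory Submission
  imports Defs
begin

theorem corollary1:
  fixes \<pi> :: "'a measure" and N :: "'w measure" and r :: "'a \<Rightarrow> real"
    and e :: "'w \<Rightarrow> 'a \<Rightarrow> real" and p :: "'a \<Rightarrow> real" and K :: nat and B :: "'a set"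
  assumes "sigma_finite_measure \<pi>"
    and "r \<in> borel_measurable \<pi>"
    and "2 \<le> K"
    and "prob_space N"
    and "(\<lambda>(\<omega>, x). e \<omega> x) \<in> borel_measurable (N \<Otimes>\<^sub>M \<pi>)"
    and "\<exists>\<mu>. \<forall>x\<in>space \<pi>. distr N borel (\<lambda>\<omega>. e \<omega> x) = \<mu>"
    and "is_density \<pi> p"
    and "B \<in> sets \<pi>"
  shows "SS r e N \<pi> p K B =
    (\<integral> z. (\<Sum>j<K. exp (r (snd (z j)) + e (fst (z j)) (snd (z j))) /
                  (\<Sum>i<K. exp (r (snd (z i)) + e (fst (z i)) (snd (z i))))
                  * indicator B (snd (z j)))
       \<partial>(\<Pi>\<^sub>M j\<in>{..<K}. sample_space N \<pi> p))"
proof -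
  note rm[measurable] = assms(2)
  note Bm[measurable] = assms(8)
  have pm[measurable]: "p \<in> borel_measurable \<pi>" and p0: "\<And>x. x \<in> space \<pi> \<Longrightarrow> 0 \<le> p x"
    and p1: "(\<integral>\<^sup>+ x. ennreal (p x) \<partial>\<pi>) = 1"
    using assms(7) by (auto simp: is_density_def)
  interpret N: prob_space N by (rule assms(4))
  define D where "D = density \<pi> (\<lambda>x. ennreal (p x))"
  have sD[measurable_cong]: "sets D = sets \<pi>" and spD: "space D = space \<pi>" by (simp_all add: D_def)
  interpret D: prob_space D
  proof
    have "emeasure D (space D) = (\<integral>\<^sup>+ x. ennreal (p x) * indicator (space \<pi>) x \<partial>\<pi>)"
      unfolding D_def by (simp add: emeasure_density)
    also have "\<dots> = 1" using p1 by (metis (no_types, lifting) mult.right_neutral indicator_simps(1) nn_integral_cong)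
    finally show "emeasure D (space D) = 1" .
  qed
  interpret ND: pair_prob_space N D by unfold_locales
  define M where "M = N \<Otimes>\<^sub>M D"
  have Meq: "sample_space N \<pi> p = M" by (simp add: sample_space_def M_def D_def)
  interpret M: prob_space M unfolding M_def by (rule ND.P.prob_space_axioms)
  define E where "E = (\<lambda>q. e (fst q) (snd q))"
  have Em0: "E \<in> borel_measurable (N \<Otimes>\<^sub>M \<pi>)"
    using assms(5) unfolding E_def by (simp add: case_prod_beta')
  have Em[measurable]: "E \<in> borel_measurable M"
  proof -
    have "sets M = sets (N \<Otimes>\<^sub>M \<pi>)" unfolding M_def by (rule sets_pair_measure_cong) (simp_all add: D_def)
    then show ?thesis using Em0 measurable_cong_sets[OF _ refl, of M "N \<Otimes>\<^sub>M \<pi>" borel] by blast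
  qed
  have Em'[measurable]: "E \<in> borel_measurable (N \<Otimes>\<^sub>M D)" using Em unfolding M_def .
  define W where "W = (\<lambda>q. exp (r (snd q) + E q))"
  have Wm[measurable]: "W \<in> borel_measurable M" unfolding W_def M_def by measurable
  have Wpos: "\<And>q. W q > 0" unfolding W_def by simp
  have W0: "\<And>q. W q \<ge> 0" using Wpos less_imp_le by blast
  obtain K' where KK: "K = Suc K'" and K'1: "1 \<le> K'" using assms(3)
    using assms(3) by (intro that[of "K - 1"]) auto
  interpret PS: product_sigma_finite "\<lambda>_::nat. M" unfolding product_sigma_finite_def using M.sigma_finite_measure_axioms by simp
  define Q where "Q = (\<Pi>\<^sub>M k\<in>{..<K'}. M)"
  define I0 where "I0 = (\<integral>\<^sup>+ y. (\<integral>\<^sup>+ x. ennreal (W y / (W y + (\<Sum>i<K'. W (x i))) * indicator B (snd y)) \<partial>Q) \<partial>M)"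
  have RHS: "(\<integral> z. (\<Sum>j<K. exp (r (snd (z j)) + e (fst (z j)) (snd (z j))) /
                  (\<Sum>i<K. exp (r (snd (z i)) + e (fst (z i)) (snd (z i))))
                  * indicator B (snd (z j)))
       \<partial>(\<Pi>\<^sub>M j\<in>{..<K}. sample_space N \<pi> p)) = enn2real (of_nat K * I0)"
  proof -
    define P where "P = (\<Pi>\<^sub>M j\<in>{..<K}. M)"
    define G where "G = (\<lambda>j (z::nat \<Rightarrow> 'w \<times> 'a). W (z j) / (\<Sum>i<K. W (z i)) * indicator B (snd (z j)))"
    have Gm[measurable]: "G j \<in> borel_measurable P" if "j < K" for j
    proof -
      have cm: "(\<lambda>z. z i) \<in> measurable P M" if "i \<in> {..<K}" for i
        unfolding P_def using that by (rule measurable_component_singleton)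
      have [measurable]: "snd \<in> measurable M \<pi>" unfolding M_def
        using measurable_snd[of N D] by (simp add: D_def)
      have s: "(\<lambda>x. \<Sum>i<K. W (x i)) \<in> borel_measurable P"
        by (intro borel_measurable_sum measurable_compose[OF cm Wm]) 
      have "(\<lambda>x. snd (x j)) \<in> measurable P \<pi>"
        using that by (intro measurable_compose[OF cm] measurable_snd) (auto simp: M_def D_def)
      from measurable_compose[OF this borel_measurable_indicator[OF Bm]]
      have ib: "(\<lambda>x. indicator B (snd (x j)) :: real) \<in> borel_measurable P" by (simp add: comp_def)
      show ?thesis unfolding G_def using s that ib
        by (intro borel_measurable_times borel_measurable_divide measurable_compose[OF cm Wm]) auto
    qed
    have G0: "0 \<le> G j z" for j z
      unfolding G_def using Wpos
      by (intro mult_nonneg_nonneg divide_nonneg_nonneg sum_nonneg) (auto simp: W0)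
    have eq1: "(\<integral> z. (\<Sum>j<K. exp (r (snd (z j)) + e (fst (z j)) (snd (z j))) /
                  (\<Sum>i<K. exp (r (snd (z i)) + e (fst (z i)) (snd (z i))))
                  * indicator B (snd (z j)))
       \<partial>(\<Pi>\<^sub>M j\<in>{..<K}. sample_space N \<pi> p)) = (\<integral> z. (\<Sum>j<K. G j z) \<partial>P)"
      unfolding Meq P_def G_def W_def E_def by simp
    also have "\<dots> = enn2real (\<integral>\<^sup>+ z. ennreal (\<Sum>j<K. G j z) \<partial>P)"
      by (rule integral_eq_nn_integral) (auto intro!: sum_nonneg G0)
    also have "(\<integral>\<^sup>+ z. ennreal (\<Sum>j<K. G j z) \<partial>P) = (\<Sum>j<K. \<integral>\<^sup>+ z. ennreal (G j z) \<partial>P)"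
      by (subst sum_ennreal[symmetric]) (auto intro!: nn_integral_sum G0)
    also have "\<dots> = (\<Sum>j<K. \<integral>\<^sup>+ z. ennreal (G K' z) \<partial>P)"
    proof (rule sum.cong[OF refl])
      fix j assume j: "j \<in> {..<K}"
      define f where "f = (\<lambda>i. if i = j then K' else if i = K' then j else i)"
      have bij: "bij_betw f {..<K} {..<K}"
        using j KK by (intro bij_betwI[where g=f]) (auto simp: f_def)
      have inj: "inj_on f {..<K}" and fK: "f \<in> {..<K} \<rightarrow> {..<K}"
        using bij by (auto simp: bij_betw_def)
      define t where "t = (\<lambda>\<omega>::nat \<Rightarrow> 'w \<times> 'a. \<lambda>n\<in>{..<K}. \<omega> (f n))"
      have tm: "t \<in> measurable P P"
        unfolding t_def P_def
        by (rule measurable_restrict) (use fK in \<open>auto intro!: measurable_component_singleton\<close>)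
      have dist: "distr P P t = P"
        using distr_PiM_reindex[of "{..<K}" "\<lambda>_. M" f "{..<K}"] inj fK M.prob_space_axioms
        unfolding P_def t_def by simp
      have "(\<integral>\<^sup>+ z. ennreal (G K' z) \<partial>P) = (\<integral>\<^sup>+ z. ennreal (G K' z) \<partial>distr P P t)"
        using dist by simp
      also have "\<dots> = (\<integral>\<^sup>+ z. ennreal (G K' (t z)) \<partial>P)"
        using KK by (intro nn_integral_distr tm) auto
      also have "\<dots> = (\<integral>\<^sup>+ z. ennreal (G j z) \<partial>P)"
      proof (rule nn_integral_cong)
        fix z assume z: "z \<in> space P"
        have "(\<Sum>i<K. W (t z i)) = (\<Sum>i<K. W (z (f i)))"
          unfolding t_def by (rule sum.cong) auto
        also have "\<dots> = (\<Sum>i<K. W (z i))"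
          by (rule sum.reindex_bij_betw[OF bij])
        finally have "(\<Sum>i<K. W (t z i)) = (\<Sum>i<K. W (z i))" .
        moreover have "t z K' = z j" unfolding t_def f_def using KK by auto
        ultimately show "ennreal (G K' (t z)) = ennreal (G j z)"
          unfolding G_def by simp
      qed
      finally show "(\<integral>\<^sup>+ z. ennreal (G j z) \<partial>P) = (\<integral>\<^sup>+ z. ennreal (G K' z) \<partial>P)" by simp
    qed
    also have "\<dots> = of_nat K * (\<integral>\<^sup>+ z. ennreal (G K' z) \<partial>P)" by simp
    also have "(\<integral>\<^sup>+ z. ennreal (G K' z) \<partial>P) = I0"
    proof -
      have Pi: "P = (\<Pi>\<^sub>M j\<in>insert K' {..<K'}. M)"
        unfolding P_def KK lessThan_Suc ..
      have "(\<integral>\<^sup>+ z. ennreal (G K' z) \<partial>P) =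
          (\<integral>\<^sup>+ y. (\<integral>\<^sup>+ x. ennreal (G K' (x(K' := y))) \<partial>Q) \<partial>M)"
        unfolding Pi Q_def
        by (rule PS.product_nn_integral_insert_rev) (use KK Gm[of K'] in \<open>auto simp: P_def lessThan_Suc\<close>)
      also have "\<dots> = I0"
        unfolding I0_def
      proof (intro nn_integral_cong)
        fix y x
        have "(\<Sum>i<K. W ((x(K' := y)) i)) = (\<Sum>i<K'. W (x i)) + W y"
          unfolding KK by (simp add: lessThan_Suc)
        then show "ennreal (G K' (x(K' := y))) =
             ennreal (W y / (W y + (\<Sum>i<K'. W (x i))) * indicator B (snd y))"
          unfolding G_def by (simp add: add.commute)
      qed
      finally show ?thesis .
    qed
    finally show ?thesis .
  qed
  have LHS: "SS r e N \<pi> p K B = enn2real (of_nat K * I0)"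
  proof -
    interpret Q: prob_space Q unfolding Q_def by (rule prob_space_PiM) (rule M.prob_space_axioms)
    interpret NQ: pair_prob_space N Q by unfold_locales
    interpret MQ: pair_prob_space M Q by unfold_locales
    have sM: "sets M = sets (N \<Otimes>\<^sub>M \<pi>)" unfolding M_def by (rule sets_pair_measure_cong) (simp_all add: D_def)
    have Wm0[measurable]: "W \<in> borel_measurable (N \<Otimes>\<^sub>M \<pi>)"
      using Wm measurable_cong_sets[OF sM refl] by blast
    define F where "F = (\<lambda>x (z::'w \<times> (nat \<Rightarrow> 'w \<times> 'a)). real K * W (fst z, x) / (W (fst z, x) + (\<Sum>k<K'. W (snd z k))))"
    define g where "g = (\<lambda>q (y::nat \<Rightarrow> 'w \<times> 'a). W q / (W q + (\<Sum>i<K'. W (y i))) * indicator B (snd q))"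
    have comp: "(\<lambda>y. y i) \<in> measurable Q M" if "i \<in> {..<K'}" for i
      unfolding Q_def using that by (rule measurable_component_singleton)
    have c1: "(\<lambda>(x::'a, z::'w \<times> (nat \<Rightarrow> 'w \<times> 'a)). (fst z, x)) \<in> measurable (\<pi> \<Otimes>\<^sub>M (N \<Otimes>\<^sub>M Q)) M"
      unfolding measurable_cong_sets[OF refl sM] by measurable
    have c2: "(\<lambda>(x::'a, z::'w \<times> (nat \<Rightarrow> 'w \<times> 'a)). snd z k) \<in> measurable (\<pi> \<Otimes>\<^sub>M (N \<Otimes>\<^sub>M Q)) M" if "k \<in> {..<K'}" for k
      using measurable_compose[OF _ comp[OF that], of "\<lambda>(x::'a, z::'w \<times> (nat \<Rightarrow> 'w \<times> 'a)). snd z"]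
      by (simp add: case_prod_beta')
    have m4: "(\<lambda>(x, z). F x z) \<in> borel_measurable (\<pi> \<Otimes>\<^sub>M (N \<Otimes>\<^sub>M Q))"
    proof -
      have a: "(\<lambda>(x::'a, z::'w \<times> (nat \<Rightarrow> 'w \<times> 'a)). W (fst z, x)) \<in> borel_measurable (\<pi> \<Otimes>\<^sub>M (N \<Otimes>\<^sub>M Q))"
        using measurable_compose[OF c1 Wm] by (simp add: case_prod_beta')
      have b: "(\<lambda>(x::'a, z::'w \<times> (nat \<Rightarrow> 'w \<times> 'a)). \<Sum>k<K'. W (snd z k)) \<in> borel_measurable (\<pi> \<Otimes>\<^sub>M (N \<Otimes>\<^sub>M Q))"
        unfolding case_prod_beta'
        by (intro borel_measurable_sum) (use measurable_compose[OF c2 Wm] in \<open>simp add: case_prod_beta'\<close>)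
      show ?thesis unfolding F_def case_prod_beta' using a b unfolding case_prod_beta'
        by (intro borel_measurable_times borel_measurable_divide borel_measurable_add) auto
    qed
    have m1: "(\<lambda>(q, y). g q y) \<in> borel_measurable (M \<Otimes>\<^sub>M Q)"
    proof -
      have snm: "snd \<in> measurable M \<pi>" unfolding M_def
        using measurable_snd[of N D] by (simp add: D_def)
      have a: "(\<lambda>qy. W (fst qy)) \<in> borel_measurable (M \<Otimes>\<^sub>M Q)"
        using measurable_compose[OF measurable_fst[of M Q] Wm] by simp
      have b: "(\<lambda>qy. \<Sum>i<K'. W (snd qy i)) \<in> borel_measurable (M \<Otimes>\<^sub>M Q)"
        by (intro borel_measurable_sum) (use measurable_compose[OF measurable_compose[OF measurable_snd[of M Q] comp] Wm] in simp)
      have c: "(\<lambda>qy. indicator B (snd (fst qy)) :: real) \<in> borel_measurable (M \<Otimes>\<^sub>M Q)"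
        using measurable_compose[OF measurable_compose[OF measurable_fst[of M Q] snm] borel_measurable_indicator[OF Bm]]
        by (simp add: comp_def)
      show ?thesis unfolding g_def case_prod_beta' using a b c
        by (intro borel_measurable_times borel_measurable_divide borel_measurable_add) auto
    qed
    have I0_eq: "I0 = (\<integral>\<^sup>+ q. (\<integral>\<^sup>+ y. ennreal (g q y) \<partial>Q) \<partial>M)"
      unfolding I0_def g_def ..
    have m1e: "(\<lambda>(q, y). ennreal (real K * g q y)) \<in> borel_measurable (M \<Otimes>\<^sub>M Q)"
      using measurable_compose[OF borel_measurable_times[OF borel_measurable_const m1] measurable_ennreal]
      by (simp add: comp_def case_prod_beta')
    have g0: "0 \<le> g q y" for q y
      unfolding g_def by (intro mult_nonneg_nonneg divide_nonneg_nonneg add_nonneg_nonneg sum_nonneg) (auto simp: W0)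
    have F0: "0 \<le> F x z" for x z
      unfolding F_def by (intro mult_nonneg_nonneg divide_nonneg_nonneg add_nonneg_nonneg sum_nonneg) (auto simp: W0)
    have Fb: "F x z \<le> real K" for x z
    proof -
      have "W (fst z, x) / (W (fst z, x) + (\<Sum>k<K'. W (snd z k))) \<le> 1"
        using Wpos[of "(fst z, x)"] sum_nonneg[of "{..<K'}" "\<lambda>k. W (snd z k)"] W0
        by (subst divide_le_eq_1) auto
      then have "real K * (W (fst z, x) / (W (fst z, x) + (\<Sum>k<K'. W (snd z k)))) \<le> real K * 1"
        by (intro mult_left_mono) auto
      then show ?thesis unfolding F_def by simp
    qed
    have Fm: "(\<lambda>z. F x z) \<in> borel_measurable (N \<Otimes>\<^sub>M Q)" if "x \<in> space \<pi>" for x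
      using measurable_Pair2[OF m4 that] by simp
    define A where "A x = (\<integral>\<^sup>+ z. ennreal (F x z) \<partial>(N \<Otimes>\<^sub>M Q))" for x
    have HF: "H r e N \<pi> p K x = (\<integral> z. F x z \<partial>(N \<Otimes>\<^sub>M Q))" for x
      unfolding H_def F_def W_def E_def Meq Q_def using KK by simp
    have Hnn: "0 \<le> H r e N \<pi> p K x" for x
      unfolding HF by (intro integral_nonneg_AE AE_I2) (simp add: F0)
    have HA: "ennreal (H r e N \<pi> p K x) = A x" if "x \<in> space \<pi>" for x
    proof -
      have "integrable (N \<Otimes>\<^sub>M Q) (F x)"
        by (rule NQ.P.integrable_const_bound[where B="real K"]) (use Fm[OF that] F0 Fb in auto)
      then show ?thesis unfolding HF A_def
        by (rule nn_integral_eq_integral[symmetric]) (auto simp: F0)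
    qed
    have HA': "H r e N \<pi> p K x = enn2real (A x)" if "x \<in> space \<pi>" for x
      using HA[OF that, symmetric] Hnn[of x] by simp
    have m4e: "(\<lambda>(x, z). ennreal (F x z)) \<in> borel_measurable (\<pi> \<Otimes>\<^sub>M (N \<Otimes>\<^sub>M Q))"
      using measurable_compose[OF m4 measurable_ennreal] by (simp add: comp_def case_prod_beta')
    have Am: "A \<in> borel_measurable \<pi>"
      unfolding A_def[abs_def] using NQ.P.borel_measurable_nn_integral[of "\<lambda>x z. ennreal (F x z)" \<pi>] m4e
      by simp
    have LHSm: "(\<lambda>x. indicator B x *\<^sub>R (p x * H r e N \<pi> p K x)) \<in> borel_measurable \<pi>"
    proof -
      have "(\<lambda>x. indicator B x * (p x * enn2real (A x))) \<in> borel_measurable \<pi>"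
        using Am by measurable
      then show ?thesis
        by (rule measurable_cong[THEN iffD1, rotated]) (simp add: HA')
    qed
    have "SS r e N \<pi> p K B = (\<integral> x. indicator B x *\<^sub>R (p x * H r e N \<pi> p K x) \<partial>\<pi>)"
      unfolding SS_def S_def set_lebesgue_integral_def ..
    also have "\<dots> = enn2real (\<integral>\<^sup>+ x. ennreal (indicator B x *\<^sub>R (p x * H r e N \<pi> p K x)) \<partial>\<pi>)"
      by (rule integral_eq_nn_integral[OF LHSm]) (auto simp: p0 Hnn intro!: AE_I2)
    also have "(\<integral>\<^sup>+ x. ennreal (indicator B x *\<^sub>R (p x * H r e N \<pi> p K x)) \<partial>\<pi>)
        = (\<integral>\<^sup>+ x. ennreal (p x) * ((indicator B x :: ennreal) * A x) \<partial>\<pi>)"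
    proof (rule nn_integral_cong)
      fix x assume x: "x \<in> space \<pi>"
      show "ennreal (indicator B x *\<^sub>R (p x * H r e N \<pi> p K x)) = ennreal (p x) * ((indicator B x :: ennreal) * A x)"
        by (cases "x \<in> B") (simp_all add: HA[OF x, symmetric] ennreal_mult p0[OF x] Hnn)
    qed
    also have "\<dots> = (\<integral>\<^sup>+ x. (indicator B x :: ennreal) * A x \<partial>D)"
      unfolding D_def by (rule nn_integral_density[symmetric]) (use Am in measurable)
    also have "\<dots> = (\<integral>\<^sup>+ x. \<integral>\<^sup>+ \<omega>. (\<integral>\<^sup>+ y. ennreal (real K * g (\<omega>, x) y) \<partial>Q) \<partial>N \<partial>D)"
    proof (rule nn_integral_cong)
      fix x assume x: "x \<in> space D"
      then have x': "x \<in> space \<pi>" by (simp add: spD)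
      have "(indicator B x :: ennreal) * A x = (\<integral>\<^sup>+ z. ennreal (indicator B x * F x z) \<partial>(N \<Otimes>\<^sub>M Q))"
        by (cases "x \<in> B") (simp_all add: A_def)
      also have "\<dots> = (\<integral>\<^sup>+ \<omega>. \<integral>\<^sup>+ y. ennreal (indicator B x * F x (\<omega>, y)) \<partial>Q \<partial>N)"
        by (rule Q.nn_integral_fst[symmetric]) (use Fm[OF x'] in measurable)
      also have "\<dots> = (\<integral>\<^sup>+ \<omega>. (\<integral>\<^sup>+ y. ennreal (real K * g (\<omega>, x) y) \<partial>Q) \<partial>N)"
        by (intro nn_integral_cong) (simp add: F_def g_def algebra_simps)
      finally show "(indicator B x :: ennreal) * A x = \<dots>" .
    qed
    also have "\<dots> = (\<integral>\<^sup>+ q. (\<integral>\<^sup>+ y. ennreal (real K * g q y) \<partial>Q) \<partial>M)"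
      unfolding M_def
      by (rule ND.nn_integral_snd) (use Q.borel_measurable_nn_integral[of "\<lambda>q y. ennreal (real K * g q y)" M] m1e in \<open>simp add: M_def\<close>)
    also have "\<dots> = (\<integral>\<^sup>+ q. ennreal (real K) * (\<integral>\<^sup>+ y. ennreal (g q y) \<partial>Q) \<partial>M)"
    proof (rule nn_integral_cong)
      fix q assume q: "q \<in> space M"
      have gm: "(\<lambda>y. g q y) \<in> borel_measurable Q"
        using measurable_Pair2[OF m1 q] by simp
      show "(\<integral>\<^sup>+ y. ennreal (real K * g q y) \<partial>Q) = ennreal (real K) * (\<integral>\<^sup>+ y. ennreal (g q y) \<partial>Q)"
        by (subst nn_integral_cmult[symmetric]) (use gm in \<open>auto simp: ennreal_mult g0\<close>)
    qed
    also have "\<dots> = ennreal (real K) * I0"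
      unfolding I0_eq
      by (rule nn_integral_cmult) (use Q.borel_measurable_nn_integral[of "\<lambda>q y. ennreal (g q y)" M] m1 g0 in simp)
    finally show ?thesis by (simp add: ennreal_of_nat_eq_real_of_nat)
  qed
  show ?thesis using LHS RHS by argo
qed
end
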